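(* For every $\varepsilon>0$ there exists a nonsplit characteristically nilpotent Lie algebra $\mathfrak{h}$ such that \[\frac{\dim\mathfrak{h}-\dim Z(\mathfrak{h})}{\dim Z(\mathfrak{h})}<\varepsilon.\]
   Context: All Lie algebras are finite-dimensional and complex. $Z(\mathfrak{h})$ denotes the center. A Lie algebra is nonsplit if it is not the direct sum of two nonzero ideals. A nilpotent Lie algebra $\mathfrak{g}$ is characteristically nilpotent if there is $m$ with $\mathfrak{g}^{[m]}=0$, where $\mathfrak{g}^{[1]}=\{f(Y): f\in \mathrm{Der}(\mathfrak{g}), Y\in\mathfrak{g}\}$ and $\mathfrak{g}^{[k]}=\mathrm{Der}(\mathfrak{g})(\mathfrak{g}^{[k-1]})$ (equivalently, $\mathrm{Der}(\mathfrak{g})$ is nilpotent). *)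

theory Defs
  imports "HOL-Analysis.Analysis" "HOL-Library.Function_Algebras"
begin

text \<open>A finite-dimensional complex Lie algebra of dimension n is modelled on the
coordinate space V n = { v :: nat => complex | v i = 0 for i >= n } (= C^n)
with a bracket given by structure constants c i j k ([e_i, e_j] = sum_k c i j k e_k).
Every n-dimensional complex Lie algebra is isomorphic to one of this form.\<close>

definition csc :: "complex \<Rightarrow> (nat \<Rightarrow> complex) \<Rightarrow> (nat \<Rightarrow> complex)" where
  "csc a v = (\<lambda>i. a * v i)"

definition V :: "nat \<Rightarrow> (nat \<Rightarrow> complex) set" where
  "V n = {v. \<forall>i\<ge>n. v i = 0}"

definition br :: "nat \<Rightarrow> (nat \<Rightarrow> nat \<Rightarrow> nat \<Rightarrow> complex)
    \<Rightarrow> (nat \<Rightarrow> complex) \<Rightarrow> (nat \<Rightarrow> complex) \<Rightarrow> (nat \<Rightarrow> complex)" where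
  "br n c x y = (\<lambda>k. if k < n then (\<Sum>i<n. \<Sum>j<n. x i * y j * c i j k) else 0)"

definition is_lie :: "nat \<Rightarrow> (nat \<Rightarrow> nat \<Rightarrow> nat \<Rightarrow> complex) \<Rightarrow> bool" where
  "is_lie n c \<longleftrightarrow>
     (\<forall>x\<in>V n. br n c x x = 0) \<and>
     (\<forall>x\<in>V n. \<forall>y\<in>V n. \<forall>z\<in>V n.
        br n c x (br n c y z) + br n c y (br n c z x) + br n c z (br n c x y) = 0)"

definition cdim :: "(nat \<Rightarrow> complex) set \<Rightarrow> nat" where
  "cdim S = vector_space.dim csc S"

definition cspan :: "(nat \<Rightarrow> complex) set \<Rightarrow> (nat \<Rightarrow> complex) set" where
  "cspan S = module.span csc S"

definition csubspace :: "(nat \<Rightarrow> complex) set \<Rightarrow> bool" where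
  "csubspace S = module.subspace csc S"

definition center :: "nat \<Rightarrow> (nat \<Rightarrow> nat \<Rightarrow> nat \<Rightarrow> complex) \<Rightarrow> (nat \<Rightarrow> complex) set" where
  "center n c = {x \<in> V n. \<forall>y\<in>V n. br n c x y = 0}"

definition is_ideal :: "nat \<Rightarrow> (nat \<Rightarrow> nat \<Rightarrow> nat \<Rightarrow> complex) \<Rightarrow> (nat \<Rightarrow> complex) set \<Rightarrow> bool" where
  "is_ideal n c I \<longleftrightarrow> csubspace I \<and> I \<subseteq> V n \<and> (\<forall>x\<in>V n. \<forall>y\<in>I. br n c x y \<in> I)"

definition nonsplit :: "nat \<Rightarrow> (nat \<Rightarrow> nat \<Rightarrow> nat \<Rightarrow> complex) \<Rightarrow> bool" where
  "nonsplit n c \<longleftrightarrow> \<not> (\<exists>I J. is_ideal n c I \<and> is_ideal n c J \<and> I \<noteq> {0} \<and> J \<noteq> {0}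
      \<and> I \<inter> J = {0} \<and> {x + y | x y. x \<in> I \<and> y \<in> J} = V n)"

fun lcs :: "nat \<Rightarrow> (nat \<Rightarrow> nat \<Rightarrow> nat \<Rightarrow> complex) \<Rightarrow> nat \<Rightarrow> (nat \<Rightarrow> complex) set" where
  "lcs n c 0 = V n"
| "lcs n c (Suc k) = cspan {br n c x y | x y. x \<in> V n \<and> y \<in> lcs n c k}"

definition nilpotent_lie :: "nat \<Rightarrow> (nat \<Rightarrow> nat \<Rightarrow> nat \<Rightarrow> complex) \<Rightarrow> bool" where
  "nilpotent_lie n c \<longleftrightarrow> (\<exists>m. lcs n c m = {0})"

definition is_derivation :: "nat \<Rightarrow> (nat \<Rightarrow> nat \<Rightarrow> nat \<Rightarrow> complex)
    \<Rightarrow> ((nat \<Rightarrow> complex) \<Rightarrow> (nat \<Rightarrow> complex)) \<Rightarrow> bool" where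
  "is_derivation n c f \<longleftrightarrow>
     f ` V n \<subseteq> V n \<and>
     (\<forall>x\<in>V n. \<forall>y\<in>V n. \<forall>a b. f (csc a x + csc b y) = csc a (f x) + csc b (f y)) \<and>
     (\<forall>x\<in>V n. \<forall>y\<in>V n. f (br n c x y) = br n c (f x) y + br n c x (f y))"

fun dseq :: "nat \<Rightarrow> (nat \<Rightarrow> nat \<Rightarrow> nat \<Rightarrow> complex) \<Rightarrow> nat \<Rightarrow> (nat \<Rightarrow> complex) set" where
  "dseq n c 0 = V n"
| "dseq n c (Suc k) = {f y | f y. is_derivation n c f \<and> y \<in> dseq n c k}"

definition char_nilpotent :: "nat \<Rightarrow> (nat \<Rightarrow> nat \<Rightarrow> nat \<Rightarrow> complex) \<Rightarrow> bool" where
  "char_nilpotent n c \<longleftrightarrow> nilpotent_lie n c \<and> (\<exists>m\<ge>1. dseq n c m = {0})"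

end

theory Submission
  imports Defs
begin

lemma sum_fun_app: "(\<Sum>a\<in>A. f a) x = (\<Sum>a\<in>A. f a x)"
  by (induction A rule: infinite_finite_induct) auto

interpretation cv: vector_space csc
  by unfold_locales (auto simp: csc_def fun_eq_iff algebra_simps)

lemma csc_app[simp]: "csc a v i = a * v i" by (simp add: csc_def)

definition ev :: "nat \<Rightarrow> nat \<Rightarrow> complex" where "ev k = (\<lambda>m. if m = k then 1 else 0)"

lemma V_expand: assumes "u \<in> V n" shows "(\<Sum>k<n. csc (u k) (ev k)) = u"
proof
  fix m show "(\<Sum>k<n. csc (u k) (ev k)) m = u m"
  proof (cases "m < n")
    case True
    have "(\<Sum>k<n. csc (u k) (ev k)) m = (\<Sum>k<n. if m = k then u k else 0)"
      unfolding sum_fun_app csc_app ev_def by (rule sum.cong) auto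
    also have "\<dots> = u m" using True by (subst sum.delta') auto
    finally show ?thesis .
  next
    case False
    then show ?thesis using assms by (auto simp: sum_fun_app ev_def V_def)
  qed
qed

definition lin :: "nat \<Rightarrow> ((nat \<Rightarrow> complex) \<Rightarrow> (nat \<Rightarrow> complex)) \<Rightarrow> bool" where
  "lin n f \<longleftrightarrow> f ` V n \<subseteq> V n \<and> (\<forall>x\<in>V n. \<forall>y\<in>V n. \<forall>a b. f (csc a x + csc b y) = csc a (f x) + csc b (f y))"

lemma V_add: "x \<in> V n \<Longrightarrow> y \<in> V n \<Longrightarrow> x + y \<in> V n" by (auto simp: V_def)
lemma V_csc: "x \<in> V n \<Longrightarrow> csc a x \<in> V n" by (auto simp: V_def)
lemma V_zero: "0 \<in> V n" by (auto simp: V_def)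
lemma ev_V: "k < n \<Longrightarrow> ev k \<in> V n" by (auto simp: V_def ev_def)

lemma lin_zero: assumes "lin n f" shows "f 0 = 0"
proof -
  have "f (csc 0 0 + csc 0 0) = csc 0 (f 0) + csc 0 (f 0)"
    using assms V_zero unfolding lin_def by blast
  moreover have "csc 0 (0::nat\<Rightarrow>complex) + csc 0 0 = 0" by (auto simp: fun_eq_iff)
  moreover have "csc 0 (f 0) + csc 0 (f 0) = 0" by (auto simp: fun_eq_iff)
  ultimately show ?thesis by simp
qed

lemma lin_sum: assumes "lin n f" "\<And>k. k \<in> S \<Longrightarrow> x k \<in> V n" "finite S"
  shows "f (\<Sum>k\<in>S. csc (a k) (x k)) = (\<Sum>k\<in>S. csc (a k) (f (x k)))"
  using assms(3,2)
proof (induction S rule: finite_induct)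
  case empty then show ?case using lin_zero[OF assms(1)] by (simp only: sum.empty)
next
  case (insert k S)
  have sV: "(\<Sum>k\<in>S. csc (a k) (x k)) \<in> V n"
    using insert by (auto simp: V_def sum_fun_app)
  have "f (\<Sum>k\<in>insert k S. csc (a k) (x k)) = f (csc (a k) (x k) + csc 1 (\<Sum>k\<in>S. csc (a k) (x k)))"
    using insert by (simp add: csc_def)
  also have "\<dots> = csc (a k) (f (x k)) + csc 1 (f (\<Sum>k\<in>S. csc (a k) (x k)))"
    using assms(1) sV insert unfolding lin_def by blast
  also have "\<dots> = (\<Sum>k\<in>insert k S. csc (a k) (f (x k)))"
    using insert by (simp add: csc_def)
  finally show ?case .
qed

lemma lin_expand: assumes "lin n f" "u \<in> V n"
  shows "f u = (\<Sum>k<n. csc (u k) (f (ev k)))"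
proof -
  have "f u = f (\<Sum>k<n. csc (u k) (ev k))" using V_expand[OF assms(2)] by simp
  also have "\<dots> = (\<Sum>k<n. csc (u k) (f (ev k)))"
    by (rule lin_sum[OF assms(1)]) (auto intro: ev_V)
  finally show ?thesis .
qed

lemma lin_coord: assumes "lin n f" "u \<in> V n"
  shows "f u m = (\<Sum>k<n. u k * f (ev k) m)"
  using lin_expand[OF assms] by (simp add: sum_fun_app)

definition N :: "nat \<Rightarrow> nat" where "N d = 3 + 2*d + d*d"
definition xI :: "nat \<Rightarrow> nat \<Rightarrow> nat" where "xI d i = 3 + i"
definition yI :: "nat \<Rightarrow> nat \<Rightarrow> nat" where "yI d j = 3 + d + j"
definition zI :: "nat \<Rightarrow> nat \<Rightarrow> nat \<Rightarrow> nat" where "zI d i j = 3 + 2*d + d*i + j"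

definition zt :: "nat \<Rightarrow> (nat \<Rightarrow> complex) \<Rightarrow> (nat \<Rightarrow> complex) \<Rightarrow> nat \<Rightarrow> nat \<Rightarrow> complex" where
  "zt d u v p q = u (xI d p) * v (yI d q) - u (yI d q) * v (xI d p)
     + (if p = q then u 0 * v (xI d p) - u (xI d p) * v 0 + u 1 * v (yI d p) - u (yI d p) * v 1 else 0)
     + (if p = 0 \<and> q = 0 then u 0 * v 2 - u 2 * v 0 else 0)
     + (if p = 1 \<and> q = 1 then u 1 * v 2 - u 2 * v 1 else 0)"

definition brf :: "nat \<Rightarrow> (nat \<Rightarrow> complex) \<Rightarrow> (nat \<Rightarrow> complex) \<Rightarrow> (nat \<Rightarrow> complex)" where
  "brf d u v = (\<lambda>k. if k = 2 then u 0 * v 1 - u 1 * v 0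
     else if 3 + 2*d \<le> k \<and> k < N d then zt d u v ((k - (3+2*d)) div d) ((k - (3+2*d)) mod d) else 0)"

definition cst :: "nat \<Rightarrow> nat \<Rightarrow> nat \<Rightarrow> nat \<Rightarrow> complex" where
  "cst d i j k = brf d (ev i) (ev j) k"

lemma idx_simps[simp]:
  "xI d i = xI d k \<longleftrightarrow> i = k" "yI d i = yI d k \<longleftrightarrow> i = k"
  "xI d i \<noteq> 0" "xI d i \<noteq> 1" "xI d i \<noteq> 2" "yI d i \<noteq> 0" "yI d i \<noteq> 1" "yI d i \<noteq> 2"
  "0 \<noteq> xI d i" "1 \<noteq> xI d i" "2 \<noteq> xI d i" "0 \<noteq> yI d i" "1 \<noteq> yI d i" "2 \<noteq> yI d i"
  "zI d p q \<noteq> 0" "zI d p q \<noteq> 1" "zI d p q \<noteq> 2" "0 \<noteq> zI d p q" "1 \<noteq> zI d p q" "2 \<noteq> zI d p q"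
  "xI d i \<noteq> Suc 0" "yI d i \<noteq> Suc 0" "zI d p q \<noteq> Suc 0"
  "Suc 0 \<noteq> xI d i" "Suc 0 \<noteq> yI d i" "Suc 0 \<noteq> zI d p q"
  by (auto simp: xI_def yI_def zI_def)

lemma idx_simps2[simp]:
  "i < d \<Longrightarrow> xI d i \<noteq> yI d j" "i < d \<Longrightarrow> yI d j \<noteq> xI d i"
  "i < d \<Longrightarrow> xI d i \<noteq> zI d p q" "i < d \<Longrightarrow> zI d p q \<noteq> xI d i"
  "j < d \<Longrightarrow> yI d j \<noteq> zI d p q" "j < d \<Longrightarrow> zI d p q \<noteq> yI d j"
  by (auto simp: xI_def yI_def zI_def)

lemma zI_inj[simp]: "q < d \<Longrightarrow> q' < d \<Longrightarrow> zI d p q = zI d p' q' \<longleftrightarrow> p = p' \<and> q = q'"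
proof -
  assume a: "q < d" "q' < d"
  have "zI d p q = zI d p' q' \<longleftrightarrow> d*p + q = d*p' + q'" by (auto simp: zI_def)
  also have "\<dots> \<longleftrightarrow> p = p' \<and> q = q'"
  proof
    assume h: "d*p + q = d*p' + q'"
    have "(d*p+q) div d = p" "(d*p'+q') div d = p'" "(d*p+q) mod d = q" "(d*p'+q') mod d = q'"
      using a by auto
    then show "p = p' \<and> q = q'" using h by metis
  qed auto
  finally show ?thesis .
qed

lemma ev_simp[simp]: "ev k m = (if m = k then 1 else 0)" by (simp add: ev_def)

lemma brf_2[simp]: "brf d u v 2 = u 0 * v 1 - u 1 * v 0" by (simp add: brf_def)
lemma brf_z[simp]: "p < d \<Longrightarrow> q < d \<Longrightarrow> brf d u v (zI d p q) = zt d u v p q"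
proof -
  assume a: "p < d" "q < d"
  have k: "zI d p q - (3 + 2*d) = d*p + q" by (simp add: zI_def)
  have "zI d p q < N d"
  proof -
    have "d*p + q < d*p + d" using a by simp
    also have "d*p + d \<le> d*d" using a by (metis add.commute mult_Suc_right mult_le_mono2 Suc_leI)
    finally show ?thesis by (simp add: zI_def N_def)
  qed
  then show ?thesis using a k by (simp add: brf_def zI_def)
qed
lemma brf_gen[simp]: "brf d u v 0 = 0" "brf d u v 1 = 0" "brf d u v (Suc 0) = 0" "i < d \<Longrightarrow> brf d u v (xI d i) = 0"
  "i < d \<Longrightarrow> brf d u v (yI d i) = 0"
  by (auto simp: brf_def xI_def yI_def)
lemma brf_out: "N d \<le> k \<Longrightarrow> brf d u v k = 0" by (simp add: brf_def N_def)

lemma idx_cases: assumes "k < N d"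
  shows "k = 0 \<or> k = 1 \<or> k = 2 \<or> (\<exists>i<d. k = xI d i) \<or> (\<exists>j<d. k = yI d j) \<or> (\<exists>p<d. \<exists>q<d. k = zI d p q)"
proof -
  consider "k < 3" | "3 \<le> k \<and> k < 3 + d" | "3 + d \<le> k \<and> k < 3 + 2*d" | "3 + 2*d \<le> k" by linarith
  then show ?thesis
  proof cases
    case 1 then show ?thesis by auto
  next
    case 2 then have "k = xI d (k - 3)" "k - 3 < d" by (auto simp: xI_def)
    then show ?thesis by blast
  next
    case 3 then have "k = yI d (k - 3 - d)" "k - 3 - d < d" by (auto simp: yI_def)
    then show ?thesis by blast
  next
    case 4
    define r where "r = k - (3 + 2*d)"
    have r: "r < d*d" using 4 assms by (simp add: r_def N_def)
    then have "d > 0" by (cases d) auto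
    have "r div d < d" using r by (simp add: less_mult_imp_div_less)
    moreover have "r mod d < d" using \<open>d > 0\<close> by simp
    moreover have "k = zI d (r div d) (r mod d)" using 4 by (simp add: zI_def r_def)
    ultimately show ?thesis by blast
  qed
qed

lemma brf_V: "brf d u v \<in> V (N d)" by (simp add: V_def brf_out)

lemma brf_lin1: "brf d (csc a x + csc b y) v = csc a (brf d x v) + csc b (brf d y v)"
  by (auto simp: fun_eq_iff brf_def zt_def algebra_simps)
lemma brf_lin2: "brf d v (csc a x + csc b y) = csc a (brf d v x) + csc b (brf d v y)"
  by (auto simp: fun_eq_iff brf_def zt_def algebra_simps)
lemma brf_anti: "brf d u v = - brf d v u"
  by (auto simp: fun_eq_iff brf_def zt_def algebra_simps)

lemma lin_brf1: "lin (N d) (\<lambda>u. brf d u v)"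
  unfolding lin_def using brf_V brf_lin1 by blast
lemma lin_brf2: "lin (N d) (\<lambda>v. brf d u v)"
  unfolding lin_def using brf_V brf_lin2 by blast

lemma br_eq: assumes "u \<in> V (N d)" "v \<in> V (N d)"
  shows "br (N d) (cst d) u v = brf d u v"
proof
  fix k
  show "br (N d) (cst d) u v k = brf d u v k"
  proof (cases "k < N d")
    case True
    have "brf d u v k = (\<Sum>i<N d. u i * brf d (ev i) v k)"
      using lin_coord[OF lin_brf1 assms(1), of v k] by simp
    also have "\<dots> = (\<Sum>i<N d. u i * (\<Sum>j<N d. v j * brf d (ev i) (ev j) k))"
      using lin_coord[OF lin_brf2 assms(2)] by simp
    also have "\<dots> = (\<Sum>i<N d. \<Sum>j<N d. u i * v j * cst d i j k)"
      by (simp add: sum_distrib_left mult.assoc cst_def)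
    finally show ?thesis using True by (simp add: br_def)
  next
    case False then show ?thesis by (simp add: br_def brf_out)
  qed
qed

definition W1 :: "nat \<Rightarrow> (nat \<Rightarrow> complex) set" where
  "W1 d = {v \<in> V (N d). v 0 = 0 \<and> v 1 = 0 \<and> (\<forall>i<d. v (xI d i) = 0 \<and> v (yI d i) = 0)}"
definition Zs :: "nat \<Rightarrow> (nat \<Rightarrow> complex) set" where
  "Zs d = {v \<in> W1 d. v 2 = 0}"

lemma zI_lt: "p < d \<Longrightarrow> q < d \<Longrightarrow> zI d p q < N d"
proof -
  assume a: "p < d" "q < d"
  have "d*p + q < d*p + d" using a by simp
  also have "d*p + d \<le> d*d" using a by (metis add.commute mult_Suc_right mult_le_mono2 Suc_leI)
  finally show ?thesis by (simp add: zI_def N_def)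
qed
lemma xI_lt: "i < d \<Longrightarrow> xI d i < N d" by (simp add: xI_def N_def)
lemma yI_lt: "i < d \<Longrightarrow> yI d i < N d" by (simp add: yI_def N_def)

lemma vec_eqI:
  assumes "u \<in> V (N d)" "v \<in> V (N d)" "u 0 = v 0" "u 1 = v 1" "u 2 = v 2"
    "\<And>i. i < d \<Longrightarrow> u (xI d i) = v (xI d i)" "\<And>i. i < d \<Longrightarrow> u (yI d i) = v (yI d i)"
    "\<And>p q. p < d \<Longrightarrow> q < d \<Longrightarrow> u (zI d p q) = v (zI d p q)"
  shows "u = v"
proof
  fix k show "u k = v k"
  proof (cases "k < N d")
    case True then show ?thesis using idx_cases[OF True] assms by auto
  next
    case False then show ?thesis using assms(1,2) by (simp add: V_def)
  qed
qed

lemma W1_sub: "W1 d \<subseteq> V (N d)" by (auto simp: W1_def)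
lemma Zs_sub: "Zs d \<subseteq> W1 d" by (auto simp: Zs_def)

lemma brf_W1: "brf d u v \<in> W1 d" by (simp add: W1_def brf_V)

lemma ev_V': "p < d \<Longrightarrow> q < d \<Longrightarrow> ev (zI d p q) \<in> V (N d)"
  using ev_V zI_lt by blast

lemma brf_W1_right: assumes "2 \<le> d" "s \<in> W1 d"
  shows "brf d x s = csc (x 0 * s 2) (ev (zI d 0 0)) + csc (x 1 * s 2) (ev (zI d 1 1))"
proof (rule vec_eqI[of _ d])
  show "brf d x s \<in> V (N d)" by (rule brf_V)
  show "csc (x 0 * s 2) (ev (zI d 0 0)) + csc (x 1 * s 2) (ev (zI d 1 1)) \<in> V (N d)"
    using assms(1) by (intro V_add V_csc ev_V') auto
  fix p q assume "p < d" "q < d"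
  then show "brf d x s (zI d p q) = (csc (x 0 * s 2) (ev (zI d 0 0)) + csc (x 1 * s 2) (ev (zI d 1 1))) (zI d p q)"
    using assms by (auto simp: zt_def W1_def)
qed (use assms in \<open>auto simp: W1_def\<close>)

lemma brf_W1_left: assumes "2 \<le> d" "s \<in> W1 d"
  shows "brf d s x = csc (- x 0 * s 2) (ev (zI d 0 0)) + csc (- x 1 * s 2) (ev (zI d 1 1))"
  using brf_W1_right[OF assms, of x] brf_anti[of d s x] by (auto simp: fun_eq_iff)

lemma Zs_ev: "2 \<le> d \<Longrightarrow> csc a (ev (zI d 0 0)) + csc b (ev (zI d 1 1)) \<in> Zs d"
  by (auto simp: Zs_def W1_def intro!: V_add V_csc ev_V')

lemma brf_W1_Zs: "2 \<le> d \<Longrightarrow> s \<in> W1 d \<Longrightarrow> brf d x s \<in> Zs d"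
  using brf_W1_right Zs_ev by metis
lemma brf_Zs: "2 \<le> d \<Longrightarrow> s \<in> Zs d \<Longrightarrow> brf d x s = 0"
  using brf_W1_right[of d s x] Zs_sub[of d] by (auto simp: Zs_def fun_eq_iff)
lemma brf_Zs_left: "2 \<le> d \<Longrightarrow> s \<in> Zs d \<Longrightarrow> brf d s x = 0"
  using brf_W1_left[of d s x] Zs_sub[of d] by (auto simp: Zs_def fun_eq_iff)

lemma is_lie_alg: assumes "2 \<le> d" shows "is_lie (N d) (cst d)"
  unfolding is_lie_def
proof (intro conjI ballI)
  fix x assume "x \<in> V (N d)"
  then show "br (N d) (cst d) x x = 0"
    using brf_anti[of d x x] by (simp add: br_eq fun_eq_iff)
next
  fix x y z assume xyz: "x \<in> V (N d)" "y \<in> V (N d)" "z \<in> V (N d)"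
  have *: "\<And>a b. a \<in> V (N d) \<Longrightarrow> b \<in> V (N d) \<Longrightarrow> br (N d) (cst d) a b = brf d a b" by (rule br_eq)
  show "br (N d) (cst d) x (br (N d) (cst d) y z) + br (N d) (cst d) y (br (N d) (cst d) z x) +
        br (N d) (cst d) z (br (N d) (cst d) x y) = 0"
    using xyz assms
  proof -
    have j: "\<And>a b c. brf d a (brf d b c) = csc (a 0 * (b 0 * c 1 - b 1 * c 0)) (ev (zI d 0 0)) + csc (a 1 * (b 0 * c 1 - b 1 * c 0)) (ev (zI d 1 1))"
      using brf_W1_right[OF assms brf_W1] by simp
    have "brf d x (brf d y z) + brf d y (brf d z x) + brf d z (brf d x y) = 0"
      unfolding j by (simp add: fun_eq_iff algebra_simps)
    then show ?thesis using xyz by (simp add: * brf_V)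
  qed
qed

lemma center_eq: assumes "2 \<le> d" shows "center (N d) (cst d) = Zs d"
proof
  show "Zs d \<subseteq> center (N d) (cst d)"
  proof
    fix x assume x: "x \<in> Zs d"
    then have xV: "x \<in> V (N d)" using Zs_sub W1_sub by blast
    have "\<forall>y\<in>V (N d). br (N d) (cst d) x y = 0"
    proof
      fix y assume "y \<in> V (N d)"
      then show "br (N d) (cst d) x y = 0" using br_eq[OF xV] brf_Zs_left[OF assms x] by simp
    qed
    then show "x \<in> center (N d) (cst d)" using xV unfolding center_def by blast
  qed
next
  show "center (N d) (cst d) \<subseteq> Zs d"
  proof
    fix x assume x: "x \<in> center (N d) (cst d)"
    then have xV: "x \<in> V (N d)" by (simp add: center_def)
    have b: "brf d x y = 0" if "y \<in> V (N d)" for y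
    proof -
      have "br (N d) (cst d) x y = 0" using x that unfolding center_def by blast
      then show ?thesis using br_eq[OF xV that] by simp
    qed
    have d0: "0 < d" "1 < d" using assms by auto
    have "brf d x (ev 1) 2 = 0" using b ev_V[of 1 "N d"] by (simp add: N_def)
    then have x0: "x 0 = 0" by simp
    have "brf d x (ev 0) 2 = 0" using b ev_V[of 0 "N d"] by (simp add: N_def)
    then have x1: "x 1 = 0" by simp
    have xx: "x (xI d i) = 0" if "i < d" for i
    proof -
      have "brf d x (ev (yI d i)) (zI d i i) = 0" using b ev_V[OF yI_lt[OF that]] by simp
      then show ?thesis using that x1 by (simp add: zt_def split: if_splits)
    qed
    have xy: "x (yI d i) = 0" if "i < d" for i
    proof -
      have "brf d x (ev (xI d i)) (zI d i i) = 0" using b ev_V[OF xI_lt[OF that]] by simp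
      then show ?thesis using that x0 by (simp add: zt_def split: if_splits)
    qed
    have "brf d x (ev 0) (zI d 0 0) = 0" using b ev_V[of 0 "N d"] by (simp add: N_def)
    then have x2: "x 2 = 0" using d0 xx by (simp add: zt_def)
    show "x \<in> Zs d" using xV x0 x1 x2 xx xy by (simp add: Zs_def W1_def)
  qed
qed

lemma W1_subspace: "cv.subspace (W1 d)"
  by (auto simp: cv.subspace_def W1_def intro: V_add V_csc V_zero)
lemma Zs_subspace: "cv.subspace (Zs d)"
  by (auto simp: cv.subspace_def Zs_def W1_def intro: V_add V_csc V_zero)

lemma lcs_Suc_sub: assumes "lcs n c k \<subseteq> V n" "\<And>x y. x \<in> V n \<Longrightarrow> y \<in> lcs n c k \<Longrightarrow> br n c x y \<in> W" "cv.subspace W"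
  shows "lcs n c (Suc k) \<subseteq> W"
proof -
  have "{br n c x y | x y. x \<in> V n \<and> y \<in> lcs n c k} \<subseteq> W" using assms(2) by blast
  then show ?thesis unfolding lcs.simps cspan_def by (rule cv.span_minimal[OF _ assms(3)])
qed

lemma nilp: assumes "2 \<le> d" shows "nilpotent_lie (N d) (cst d)"
proof -
  have l1: "lcs (N d) (cst d) 1 \<subseteq> W1 d"
    unfolding One_nat_def
    by (rule lcs_Suc_sub[OF _ _ W1_subspace]) (auto simp: br_eq brf_W1)
  have l2: "lcs (N d) (cst d) 2 \<subseteq> Zs d"
  proof -
    have "lcs (N d) (cst d) (Suc 1) \<subseteq> Zs d"
    proof (rule lcs_Suc_sub[OF _ _ Zs_subspace])
      show "lcs (N d) (cst d) 1 \<subseteq> V (N d)" using l1 W1_sub by blast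
      fix x y assume "x \<in> V (N d)" "y \<in> lcs (N d) (cst d) 1"
      moreover then have "y \<in> W1 d" "y \<in> V (N d)" using l1 W1_sub by blast+
      ultimately show "br (N d) (cst d) x y \<in> Zs d" using br_eq brf_W1_Zs[OF assms] by simp
    qed
    then show ?thesis by (simp add: numeral_2_eq_2)
  qed
  have l3: "lcs (N d) (cst d) (Suc 2) \<subseteq> {0}"
  proof (rule lcs_Suc_sub)
    show "lcs (N d) (cst d) 2 \<subseteq> V (N d)" using l2 Zs_sub W1_sub by blast
    fix x y assume "x \<in> V (N d)" "y \<in> lcs (N d) (cst d) 2"
    moreover then have "y \<in> Zs d" "y \<in> V (N d)" using l2 Zs_sub W1_sub by blast+
    ultimately show "br (N d) (cst d) x y \<in> {0}" using br_eq brf_Zs[OF assms] by simp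
  next
    show "cv.subspace {0}" by (simp add: cv.subspace_def csc_def fun_eq_iff zero_fun_def)
  qed
  have "0 \<in> lcs (N d) (cst d) (Suc 2)"
    unfolding lcs.simps cspan_def by (rule cv.span_zero)
  then have "lcs (N d) (cst d) (Suc 2) = {0}" using l3 by blast
  then show ?thesis unfolding nilpotent_lie_def by blast
qed

lemma ev_inj: "inj ev"
proof (rule injI)
  fix a b assume "ev a = ev b"
  then have "ev a a = ev b a" by simp
  then show "a = b" by (simp split: if_splits)
qed

lemma low_cases: "k < 3 + 2*d \<Longrightarrow> k = 0 \<or> k = 1 \<or> k = 2 \<or> (\<exists>i<d. k = xI d i) \<or> (\<exists>i<d. k = yI d i)"
proof -
  assume a: "k < 3 + 2*d"
  consider "k < 3" | "3 \<le> k \<and> k < 3 + d" | "3 + d \<le> k" by linarith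
  then show ?thesis
  proof cases
    case 1 then show ?thesis by auto
  next
    case 2 then have "k = xI d (k - 3)" "k - 3 < d" by (auto simp: xI_def)
    then show ?thesis by blast
  next
    case 3 then have "k = yI d (k - 3 - d)" "k - 3 - d < d" using a by (auto simp: yI_def)
    then show ?thesis by blast
  qed
qed

lemma Zs_low: "v \<in> Zs d \<Longrightarrow> k < 3 + 2*d \<Longrightarrow> v k = 0"
  using low_cases[of k d] by (auto simp: Zs_def W1_def)

lemma cdim_Zs: "cdim (Zs d) = d * d"
proof -
  define B where "B = ev ` {3+2*d..<N d}"
  have fin: "finite B" by (simp add: B_def)
  have BZ: "B \<subseteq> Zs d"
  proof
    fix x assume "x \<in> B"
    then obtain k where k: "3+2*d \<le> k" "k < N d" "x = ev k" by (auto simp: B_def)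
    have "\<forall>i<d. k \<noteq> xI d i \<and> k \<noteq> yI d i" using k by (auto simp: xI_def yI_def)
    then show "x \<in> Zs d" using k ev_V[of k "N d"] by (auto simp: Zs_def W1_def)
  qed
  have ZB: "Zs d \<subseteq> cv.span B"
  proof
    fix v assume v: "v \<in> Zs d"
    then have vV: "v \<in> V (N d)" using Zs_sub W1_sub by blast
    have "(\<Sum>k<N d. csc (v k) (ev k)) \<in> cv.span B"
    proof (rule cv.span_sum)
      fix k assume "k \<in> {..<N d}"
      show "csc (v k) (ev k) \<in> cv.span B"
      proof (cases "k < 3 + 2*d")
        case True
        have e: "csc (v k) (ev k) = 0" using Zs_low[OF v True] by (simp add: fun_eq_iff)
        show ?thesis by (subst e) (rule cv.span_zero)
      next
        case False
        then have "ev k \<in> B" using \<open>k \<in> {..<N d}\<close> by (auto simp: B_def)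
        then show ?thesis by (intro cv.span_scale cv.span_base)
      qed
    qed
    then show "v \<in> cv.span B" using V_expand[OF vV] by simp
  qed
  have ind: "cv.independent B"
  proof (rule cv.independent_if_scalars_zero[OF fin])
    fix f x assume s: "(\<Sum>x\<in>B. csc (f x) x) = 0" and x: "x \<in> B"
    then obtain k where k: "x = ev k" by (auto simp: B_def)
    have "(\<Sum>y\<in>B. csc (f y) y) k = 0" using s by simp
    then have "(\<Sum>y\<in>B. f y * y k) = 0" by (simp add: sum_fun_app)
    moreover have "(\<Sum>y\<in>B. f y * y k) = (\<Sum>y\<in>B. if ev k = y then f y else 0)"
    proof (rule sum.cong)
      fix y assume "y \<in> B"
      then obtain k' where y: "y = ev k'" by (auto simp: B_def)
      have "ev k = ev k' \<longleftrightarrow> k = k'" using ev_inj by (auto dest: injD)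
      then show "f y * y k = (if ev k = y then f y else 0)"
        using y by simp
    qed simp
    moreover have "\<dots> = f x" using x k fin by (subst sum.delta') auto
    ultimately show "f x = 0" by simp
  qed
  have "card B = cv.dim (Zs d)" by (rule cv.basis_card_eq_dim[OF BZ ZB ind])
  moreover have "card B = d * d"
  proof -
    have "card B = card {3+2*d..<N d}"
      unfolding B_def by (rule card_image[OF inj_on_subset[OF ev_inj subset_UNIV]])
    then show ?thesis by (simp add: N_def)
  qed
  ultimately show ?thesis by (simp add: cdim_def)
qed

lemma ev_z_V: "p < d \<Longrightarrow> q < d \<Longrightarrow> ev (zI d p q) \<in> V (N d)" using ev_V zI_lt by blast
lemma ev_x_V: "i < d \<Longrightarrow> ev (xI d i) \<in> V (N d)" using ev_V xI_lt by blast
lemma ev_y_V: "i < d \<Longrightarrow> ev (yI d i) \<in> V (N d)" using ev_V yI_lt by blast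
lemma ev_012_V: "ev 0 \<in> V (N d)" "ev 1 \<in> V (N d)" "ev 2 \<in> V (N d)" by (auto intro!: ev_V simp: N_def)

lemma bxx: "i < d \<Longrightarrow> k < d \<Longrightarrow> brf d (ev (xI d i)) (ev (xI d k)) = 0"
  by (rule vec_eqI[of _ d]) (auto simp: brf_V V_zero zt_def)
lemma byy: "i < d \<Longrightarrow> k < d \<Longrightarrow> brf d (ev (yI d i)) (ev (yI d k)) = 0"
  by (rule vec_eqI[of _ d]) (auto simp: brf_V V_zero zt_def)
lemma b0y: "j < d \<Longrightarrow> brf d (ev 0) (ev (yI d j)) = 0"
  by (rule vec_eqI[of _ d]) (auto simp: brf_V V_zero zt_def)
lemma b1x: "i < d \<Longrightarrow> brf d (ev 1) (ev (xI d i)) = 0"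
  by (rule vec_eqI[of _ d]) (auto simp: brf_V V_zero zt_def)
lemma bxy: "i < d \<Longrightarrow> j < d \<Longrightarrow> brf d (ev (xI d i)) (ev (yI d j)) = ev (zI d i j)"
  by (rule vec_eqI[of _ d]) (auto simp: brf_V ev_z_V zt_def)
lemma b0x: "i < d \<Longrightarrow> brf d (ev 0) (ev (xI d i)) = ev (zI d i i)"
  by (rule vec_eqI[of _ d]) (auto simp: brf_V ev_z_V zt_def)
lemma b1y: "i < d \<Longrightarrow> brf d (ev 1) (ev (yI d i)) = ev (zI d i i)"
  by (rule vec_eqI[of _ d]) (auto simp: brf_V ev_z_V zt_def)
lemma b01: "brf d (ev 0) (ev 1) = ev 2"
  by (rule vec_eqI[of _ d]) (auto simp: brf_V ev_012_V zt_def)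
lemma b02: "0 < d \<Longrightarrow> brf d (ev 0) (ev 2) = ev (zI d 0 0)"
  by (rule vec_eqI[of _ d]) (auto simp: brf_V ev_z_V zt_def)
lemma b12: "1 < d \<Longrightarrow> brf d (ev 1) (ev 2) = ev (zI d 1 1)"
  by (rule vec_eqI[of _ d]) (auto simp: brf_V ev_z_V zt_def)

declare if_cong[cong]


lemma der_lin: "is_derivation n c f \<Longrightarrow> lin n f"
  unfolding is_derivation_def lin_def by blast

lemma der_leib: assumes "is_derivation (N d) (cst d) f" "x \<in> V (N d)" "y \<in> V (N d)"
  shows "f (brf d x y) = brf d (f x) y + brf d x (f y)"
proof -
  have fx: "f x \<in> V (N d)" "f y \<in> V (N d)" using assms unfolding is_derivation_def by auto
  have "f (br (N d) (cst d) x y) = br (N d) (cst d) (f x) y + br (N d) (cst d) x (f y)"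
    using assms unfolding is_derivation_def by blast
  then show ?thesis using br_eq fx assms(2,3) by simp
qed

lemma der_leibc: assumes "is_derivation (N d) (cst d) f" "x \<in> V (N d)" "y \<in> V (N d)"
  shows "f (brf d x y) k = brf d (f x) y k + brf d x (f y) k"
  using der_leib[OF assms] by simp

lemma ex_other: "3 \<le> (d::nat) \<Longrightarrow> a < d \<Longrightarrow> b < d \<Longrightarrow> \<exists>k<d. k \<noteq> a \<and> k \<noteq> b"
proof -
  assume d: "3 \<le> d"
  consider "0 \<noteq> a \<and> 0 \<noteq> b" | "1 \<noteq> a \<and> 1 \<noteq> b" | "2 \<noteq> a \<and> 2 \<noteq> b" by arith
  then show ?thesis
  proof cases
    case 1 then show ?thesis using d by (intro exI[of _ 0]) auto
  next
    case 2 then show ?thesis using d by (intro exI[of _ 1]) auto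
  next
    case 3 then show ?thesis using d by (intro exI[of _ 2]) auto
  qed
qed

lemma der_gen:
  assumes d3: "3 \<le> d" and der: "is_derivation (N d) (cst d) f"
  shows "f (ev 0) \<in> W1 d \<and> f (ev 1) \<in> W1 d \<and> (\<forall>i<d. f (ev (xI d i)) \<in> W1 d \<and> f (ev (yI d i)) \<in> W1 d)"
proof -
  have f0: "f 0 = 0" using lin_zero[OF der_lin[OF der]] .
  have d0: "0 < d" "1 < d" "2 < d" using d3 by auto
  note L = der_leibc[OF der]
  note evs = ev_x_V ev_y_V ev_012_V ev_z_V ev_012_V(2)[unfolded One_nat_def]
  note b1x' = b1x[unfolded One_nat_def] and b1y' = b1y[unfolded One_nat_def]
  have fV: "f x \<in> V (N d)" if "x \<in> V (N d)" for x using der that unfolding is_derivation_def by auto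
  have S1a: "f (ev (xI d i)) (yI d q) = 0" if "i < d" "q < d" "k < d" "k \<noteq> i" "k \<noteq> q" for i q k
    using L[of "ev (xI d i)" "ev (xI d k)" "zI d k q"] that by (simp add: evs bxx f0 zt_def split: if_splits)
  have X_Y: "f (ev (xI d i)) (yI d q) = 0" if "i < d" "q < d" for i q
    using ex_other[OF d3 that] S1a that by blast
  have X_0: "f (ev (xI d i)) 0 = 0" if i: "i < d" for i
  proof -
    obtain k where k: "k < d" "k \<noteq> i" using ex_other[OF d3 i i] by blast
    show ?thesis using L[of "ev (xI d i)" "ev (xI d k)" "zI d k k"] i k X_Y[of i k]
      by (simp add: evs bxx f0 zt_def split: if_splits)
  qed
  have S2a: "f (ev (yI d j)) (xI d p) = 0" if "j < d" "p < d" "l < d" "l \<noteq> j" "l \<noteq> p" for j p l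
    using L[of "ev (yI d j)" "ev (yI d l)" "zI d p l"] that by (simp add: evs byy f0 zt_def split: if_splits)
  have Y_X: "f (ev (yI d j)) (xI d p) = 0" if "j < d" "p < d" for j p
    using ex_other[OF d3 that] S2a that by blast
  have Y_1: "f (ev (yI d j)) 1 = 0" if j: "j < d" for j
  proof -
    obtain l where l: "l < d" "l \<noteq> j" using ex_other[OF d3 j j] by blast
    show ?thesis using L[of "ev (yI d j)" "ev (yI d l)" "zI d l l"] j l Y_X[of j l]
      by (simp add: evs byy f0 zt_def split: if_splits)
  qed
  have S3a: "f (ev 0) (xI d p) = 0" if "p < d" "j < d" "j \<noteq> p" for p j
    using L[of "ev 0" "ev (yI d j)" "zI d p j"] that by (simp add: evs b0y f0 zt_def split: if_splits)
  have A_X: "f (ev 0) (xI d p) = 0" if "p < d" for p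
    using ex_other[OF d3 that that] S3a that by blast
  have A_1: "f (ev 0) 1 = 0"
    using L[of "ev 0" "ev (yI d 1)" "zI d 1 1"] d0 A_X[of 1] Y_X[of 1 1] by (simp add: evs b0y f0 zt_def split: if_splits)
  have S4a: "f (ev 1) (yI d q) = 0" if "q < d" "i < d" "i \<noteq> q" for q i
    using L[of "ev 1" "ev (xI d i)" "zI d i q"] that by (simp add: evs b1x b1x' f0 zt_def split: if_splits)
  have B_Y: "f (ev 1) (yI d q) = 0" if "q < d" for q
    using ex_other[OF d3 that that] S4a that by blast
  have B_0: "f (ev 1) 0 = 0"
    using L[of "ev 1" "ev (xI d 0)" "zI d 0 0"] d0 X_Y[of 0 0] B_Y[of 0] by (simp add: evs b1x b1x' f0 zt_def split: if_splits)
  have X0_2: "f (ev (xI d 0)) 2 = 0"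
    using L[of "ev 1" "ev (xI d 0)" "zI d 1 1"] d0 X_Y[of 0 1] by (simp add: evs b1x b1x' f0 zt_def split: if_splits)
  have Y1_2: "f (ev (yI d 1)) 2 = 0"
    using L[of "ev 0" "ev (yI d 1)" "zI d 0 0"] d0 Y_X[of 1 0] by (simp add: evs b0y f0 zt_def split: if_splits)
  have S6: "brf d (f (ev 0)) (ev (xI d i)) + brf d (ev 0) (f (ev (xI d i)))
      = brf d (f (ev (xI d i))) (ev (yI d i)) + brf d (ev (xI d i)) (f (ev (yI d i)))" if "i < d" for i
    using der_leib[OF der, of "ev 0" "ev (xI d i)"] der_leib[OF der, of "ev (xI d i)" "ev (yI d i)"] that
    by (simp add: evs b0x bxy)
  have X_1: "f (ev (xI d i)) 1 = 0" if "i < d" for i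
    using fun_cong[OF S6[OF that], of 2] by simp
  have X_X: "f (ev (xI d i)) (xI d p) = 0" if "i < d" "p < d" "p \<noteq> i" for i p
    using fun_cong[OF S6[OF that(1)], of "zI d p i"] that by (simp add: zt_def split: if_splits)
  have YA: "f (ev (yI d i)) (yI d q) = - f (ev 0) (yI d q)" if "i < d" "q < d" "q \<noteq> i" for i q
    using fun_cong[OF S6[OF that(1)], of "zI d i q"] that by (simp add: zt_def split: if_splits)
  have S6d: "- f (ev 0) (yI d i) + f (ev 0) 0 + f (ev (xI d i)) (xI d i) + (if i = 0 then f (ev (xI d i)) 2 else 0)
      = f (ev (xI d i)) (xI d i) + f (ev (xI d i)) 1 + f (ev (yI d i)) (yI d i) - f (ev (yI d i)) 0" if "i < d" for i
    using fun_cong[OF S6[OF that(1)], of "zI d i i"] that by (simp add: zt_def split: if_splits)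
  have S7: "brf d (f (ev 1)) (ev (yI d j)) + brf d (ev 1) (f (ev (yI d j)))
      = brf d (f (ev (xI d j))) (ev (yI d j)) + brf d (ev (xI d j)) (f (ev (yI d j)))" if "j < d" for j
    using der_leib[OF der, of "ev 1" "ev (yI d j)"] der_leib[OF der, of "ev (xI d j)" "ev (yI d j)"] that
    by (simp add: evs b1y b1y' bxy)
  have Y_0: "f (ev (yI d j)) 0 = 0" if "j < d" for j
    using fun_cong[OF S7[OF that], of 2] by simp
  have Y_Y: "f (ev (yI d j)) (yI d q) = 0" if "j < d" "q < d" "q \<noteq> j" for j q
    using fun_cong[OF S7[OF that(1)], of "zI d j q"] that by (simp add: zt_def split: if_splits)
  have BX: "f (ev 1) (xI d p) = f (ev (xI d j)) (xI d p)" if "j < d" "p < d" "p \<noteq> j" for j p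
    using fun_cong[OF S7[OF that(1)], of "zI d p j"] that by (simp add: zt_def split: if_splits)
  have S7d: "f (ev 1) (xI d j) + f (ev 1) 1 + f (ev (yI d j)) (yI d j) + (if j = 1 then f (ev (yI d j)) 2 else 0)
      = f (ev (xI d j)) (xI d j) + f (ev (xI d j)) 1 + f (ev (yI d j)) (yI d j) - f (ev (yI d j)) 0" if "j < d" for j
    using fun_cong[OF S7[OF that(1)], of "zI d j j"] that by (simp add: zt_def split: if_splits)
  have A_Y: "f (ev 0) (yI d q) = 0" if q: "q < d" for q
  proof -
    obtain i where i: "i < d" "i \<noteq> q" using ex_other[OF d3 q q] by blast
    show ?thesis using YA[OF i(1) q] Y_Y[OF i(1) q] i by simp
  qed
  have B_X: "f (ev 1) (xI d p) = 0" if p: "p < d" for p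
  proof -
    obtain j where j: "j < d" "j \<noteq> p" using ex_other[OF d3 p p] by blast
    show ?thesis using BX[OF j(1) p] X_X[OF j(1) p] j by simp
  qed
  have eta: "f (ev (yI d i)) (yI d i) = f (ev 0) 0" if i: "i < d" for i
    using S6d[OF i] A_Y[OF i] X_1[OF i] Y_0[OF i] X0_2 by (cases "i = 0") auto
  have xi: "f (ev (xI d j)) (xI d j) = f (ev 1) 1" if j: "j < d" for j
    using S7d[OF j] B_X[OF j] X_1[OF j] Y_0[OF j] Y1_2 by (cases "j = 1") auto
  have C: "f (ev 2) = brf d (f (ev 0)) (ev 1) + brf d (ev 0) (f (ev 1))"
    using der_leib[OF der, of "ev 0" "ev 1"] by (simp add: evs b01 b01[unfolded One_nat_def])
  have C2: "f (ev 2) 2 = f (ev 0) 0 + f (ev 1) 1" using C A_1 B_0 by simp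
  have Cx: "f (ev 2) (xI d 0) = 0" "f (ev 2) (yI d 1) = 0" using C d0 by simp_all
  have e1: "f (ev (zI d 0 0)) (zI d 0 0) = f (ev 0) 0 + f (ev 2) (xI d 0) + f (ev 2) 2"
    using L[of "ev 0" "ev 2" "zI d 0 0"] d0 by (simp add: evs b02 zt_def)
  have e2: "f (ev (zI d 0 0)) (zI d 0 0) = f (ev (xI d 0)) (xI d 0) + f (ev (xI d 0)) 1 + f (ev (yI d 0)) (yI d 0) - f (ev (yI d 0)) 0"
    using L[of "ev (xI d 0)" "ev (yI d 0)" "zI d 0 0"] d0 by (simp add: evs bxy zt_def)
  have alpha: "f (ev 0) 0 = 0"
    using e1 e2 Cx C2 xi[of 0] eta[of 0] X_1[of 0] Y_0[of 0] d0 by simp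
  have e3: "f (ev (zI d 1 1)) (zI d 1 1) = f (ev 1) 1 + f (ev 2) (yI d 1) + f (ev 2) 2"
    using L[of "ev 1" "ev 2" "zI d 1 1"] d0 by (simp add: evs b12 b12[unfolded One_nat_def] zt_def)
  have e4: "f (ev (zI d 1 1)) (zI d 1 1) = f (ev (xI d 1)) (xI d 1) + f (ev (xI d 1)) 1 + f (ev (yI d 1)) (yI d 1) - f (ev (yI d 1)) 0"
    using L[of "ev (xI d 1)" "ev (yI d 1)" "zI d 1 1"] d0 by (simp add: evs bxy zt_def)
  have beta: "f (ev 1) 1 = 0"
    using e3 e4 Cx C2 xi[of 1] eta[of 1] X_1[of 1] Y_0[of 1] d0 alpha by simp
  have XX: "f (ev (xI d i)) (xI d p) = 0" if "i < d" "p < d" for i p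
    using X_X[OF that] xi[OF that(1)] beta by (cases "p = i") auto
  have YY: "f (ev (yI d j)) (yI d q) = 0" if "j < d" "q < d" for j q
    using Y_Y[OF that] eta[OF that(1)] alpha by (cases "q = j") auto
  show ?thesis
    using fV evs alpha A_1 A_X A_Y B_0 beta B_X B_Y X_0 X_1 XX X_Y Y_0 Y_1 Y_X YY
    by (simp add: W1_def)
qed

lemma brf_W1_Zs_left: "2 \<le> d \<Longrightarrow> s \<in> W1 d \<Longrightarrow> brf d s x \<in> Zs d"
  using brf_W1_Zs[of d s x] brf_anti[of d s x] cv.subspace_neg[OF Zs_subspace] by metis

context
  fixes d f assumes d3: "3 \<le> d" and der: "is_derivation (N d) (cst d) f"
begin

lemma d2: "2 \<le> d" using d3 by simp

lemma f_ev2: "f (ev 2) = brf d (f (ev 0)) (ev 1) + brf d (ev 0) (f (ev 1))"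
  using der_leib[OF der, of "ev 0" "ev 1"] by (simp add: ev_012_V ev_012_V(2)[unfolded One_nat_def] b01 b01[unfolded One_nat_def])

lemma f_evz: "p < d \<Longrightarrow> q < d \<Longrightarrow> f (ev (zI d p q)) = brf d (f (ev (xI d p))) (ev (yI d q)) + brf d (ev (xI d p)) (f (ev (yI d q)))"
  using der_leib[OF der, of "ev (xI d p)" "ev (yI d q)"] by (simp add: ev_x_V ev_y_V bxy)

lemma f_ev_W1: assumes "k < N d" shows "f (ev k) \<in> W1 d"
  using idx_cases[OF assms] der_gen[OF d3 der] f_ev2 f_evz
    cv.subspace_add[OF W1_subspace brf_W1 brf_W1] by auto

lemma f_ev2_Zs: "f (ev 2) \<in> Zs d"
  unfolding f_ev2 using der_gen[OF d3 der]
  by (intro cv.subspace_add[OF Zs_subspace] brf_W1_Zs_left[OF d2] brf_W1_Zs[OF d2]) auto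

lemma f_evz0: assumes "p < d" "q < d" shows "f (ev (zI d p q)) = 0"
proof -
  have "f (ev (xI d p)) \<in> W1 d" "f (ev (yI d q)) \<in> W1 d" using der_gen[OF d3 der] assms by auto
  then show ?thesis unfolding f_evz[OF assms]
    using assms by (simp add: brf_W1_left[OF d2] brf_W1_right[OF d2] fun_eq_iff)
qed

lemma der_V_W1: assumes "u \<in> V (N d)" shows "f u \<in> W1 d"
  unfolding lin_expand[OF der_lin[OF der] assms]
  by (rule cv.subspace_sum[OF W1_subspace]) (auto intro: cv.subspace_scale[OF W1_subspace] f_ev_W1)

lemma der_W1_Zs: assumes "w \<in> W1 d" shows "f w \<in> Zs d"
proof -
  have wV: "w \<in> V (N d)" using assms W1_sub by blast
  show ?thesis unfolding lin_expand[OF der_lin[OF der] wV]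
  proof (rule cv.subspace_sum[OF Zs_subspace])
    fix k assume k: "k \<in> {..<N d}"
    then have "k < N d" by simp
    show "csc (w k) (f (ev k)) \<in> Zs d"
      using idx_cases[OF \<open>k < N d\<close>]
    proof (elim disjE exE conjE)
      assume "k = 2" then show ?thesis using f_ev2_Zs by (simp add: cv.subspace_scale[OF Zs_subspace])
    next
      fix p q assume "p < d" "q < d" "k = zI d p q"
      then show ?thesis using f_evz0 cv.subspace_scale[OF Zs_subspace] cv.subspace_0[OF Zs_subspace] by simp
    qed (use assms cv.subspace_0[OF Zs_subspace] in \<open>auto simp: W1_def fun_eq_iff csc_def zero_fun_def xI_def yI_def\<close>)
  qed
qed

lemma der_Zs_0: assumes "w \<in> Zs d" shows "f w = 0"
proof -
  have wV: "w \<in> V (N d)" using assms Zs_sub W1_sub by blast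
  have "(\<Sum>k<N d. csc (w k) (f (ev k))) = (\<Sum>k<N d. 0)"
  proof (rule sum.cong)
    fix k assume k: "k \<in> {..<N d}"
    show "csc (w k) (f (ev k)) = 0"
    proof (cases "k < 3 + 2*d")
      case True then show ?thesis using Zs_low[OF assms] by (simp add: fun_eq_iff)
    next
      case False
      then obtain p q where "p < d" "q < d" "k = zI d p q" using idx_cases[of k d] k by (auto simp: xI_def yI_def)
      then show ?thesis using f_evz0 by (simp add: fun_eq_iff)
    qed
  qed simp
  then show ?thesis unfolding lin_expand[OF der_lin[OF der] wV] by simp
qed

end

lemma zero_der: "is_derivation (N d) (cst d) (\<lambda>x. 0)"
  unfolding is_derivation_def by (auto simp: V_def fun_eq_iff br_def)

lemma zero_dseq: "0 \<in> dseq (N d) (cst d) k"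
proof (induction k)
  case 0 then show ?case by (simp add: V_def)
next
  case (Suc k)
  show ?case
    apply (simp only: dseq.simps)
    apply (rule CollectI)
    apply (rule exI[where x="\<lambda>x. 0"])
    apply (rule exI[where x=0])
    using zero_der[of d] Suc by (simp add: zero_fun_def)
qed

lemma char_nilp: assumes "3 \<le> d" shows "char_nilpotent (N d) (cst d)"
proof -
  have s1: "dseq (N d) (cst d) 1 \<subseteq> W1 d" using der_V_W1[OF assms] by auto
  have s2: "dseq (N d) (cst d) (Suc 1) \<subseteq> Zs d"
  proof
    fix x assume "x \<in> dseq (N d) (cst d) (Suc 1)"
    then obtain g y where "x = g y" "is_derivation (N d) (cst d) g" "y \<in> dseq (N d) (cst d) 1"
      by (simp only: dseq.simps) blast
    then show "x \<in> Zs d" using s1 der_W1_Zs[OF assms] by blast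
  qed
  have s3: "dseq (N d) (cst d) (Suc (Suc 1)) \<subseteq> {0}"
  proof
    fix x assume "x \<in> dseq (N d) (cst d) (Suc (Suc 1))"
    then obtain g y where "x = g y" "is_derivation (N d) (cst d) g" "y \<in> dseq (N d) (cst d) (Suc 1)"
      by (simp only: dseq.simps) blast
    then show "x \<in> {0}" using s2 der_Zs_0[OF assms] by blast
  qed
  have "dseq (N d) (cst d) (Suc (Suc 1)) = {0}" using s3 zero_dseq by blast
  then have "dseq (N d) (cst d) 3 = {0}" by (simp add: numeral_3_eq_3)
  moreover have "nilpotent_lie (N d) (cst d)" using nilp assms by simp
  ultimately show ?thesis unfolding char_nilpotent_def by (intro conjI exI[of _ 3]) auto
qed

declare if_cong[cong]

definition projI :: "(nat \<Rightarrow> complex) set \<Rightarrow> (nat \<Rightarrow> complex) set \<Rightarrow> (nat \<Rightarrow> complex) \<Rightarrow> (nat \<Rightarrow> complex)" where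
  "projI I J u = (THE x. x \<in> I \<and> u - x \<in> J)"

lemma brf_diff1: "brf d (x - y) v = brf d x v - brf d y v"
  by (auto simp: fun_eq_iff brf_def zt_def algebra_simps)
lemma brf_diff2: "brf d v (x - y) = brf d v x - brf d v y"
  by (auto simp: fun_eq_iff brf_def zt_def algebra_simps)

locale decomp =
  fixes d :: nat and I J :: "(nat \<Rightarrow> complex) set"
  assumes d3: "3 \<le> d" and iI: "is_ideal (N d) (cst d) I" and iJ: "is_ideal (N d) (cst d) J"
    and int: "I \<inter> J = {0}" and sm: "{x + y | x y. x \<in> I \<and> y \<in> J} = V (N d)"
begin

abbreviation "T \<equiv> projI I J"

lemma sI: "cv.subspace I" using iI by (simp add: is_ideal_def csubspace_def)
lemma sJ: "cv.subspace J" using iJ by (simp add: is_ideal_def csubspace_def)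
lemma IV: "I \<subseteq> V (N d)" using iI by (simp add: is_ideal_def)
lemma JV: "J \<subseteq> V (N d)" using iJ by (simp add: is_ideal_def)

lemma uniq: "x \<in> I \<Longrightarrow> x' \<in> I \<Longrightarrow> u - x \<in> J \<Longrightarrow> u - x' \<in> J \<Longrightarrow> x = x'"
proof -
  assume a: "x \<in> I" "x' \<in> I" "u - x \<in> J" "u - x' \<in> J"
  have "x - x' \<in> I" using cv.subspace_diff[OF sI a(1,2)] .
  moreover have "(u - x') - (u - x) \<in> J" using cv.subspace_diff[OF sJ a(4,3)] .
  moreover have "(u - x') - (u - x) = x - x'" by simp
  ultimately have "x - x' \<in> I \<inter> J" by simp
  then show "x = x'" using int by simp
qed

lemma ex_dec: "u \<in> V (N d) \<Longrightarrow> \<exists>x. x \<in> I \<and> u - x \<in> J"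
proof -
  assume "u \<in> V (N d)"
  then obtain x y where "u = x + y" "x \<in> I" "y \<in> J" using sm by blast
  then show ?thesis by (intro exI[of _ x]) simp
qed

lemma T_prop: assumes "u \<in> V (N d)" shows "T u \<in> I" "u - T u \<in> J"
proof -
  obtain x where x: "x \<in> I" "u - x \<in> J" using ex_dec[OF assms] by blast
  have "T u \<in> I \<and> u - T u \<in> J" unfolding projI_def
  proof (rule theI[of _ x])
    show "x \<in> I \<and> u - x \<in> J" using x by simp
    fix y assume "y \<in> I \<and> u - y \<in> J"
    then show "y = x" using uniq[of y x u] x by simp
  qed
  then show "T u \<in> I" "u - T u \<in> J" by auto
qed

lemma T_eq: assumes "u \<in> V (N d)" "x \<in> I" "u - x \<in> J" shows "T u = x"
  by (rule uniq[OF T_prop(1)[OF assms(1)] assms(2) T_prop(2)[OF assms(1)] assms(3)])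

lemma T_I: assumes "x \<in> I" shows "T x = x"
proof (rule T_eq)
  show "x \<in> V (N d)" using assms IV by blast
  show "x - x \<in> J" using cv.subspace_0[OF sJ] by simp
qed (rule assms)

lemma T_V: "u \<in> V (N d) \<Longrightarrow> T u \<in> V (N d)" using T_prop(1) IV by blast

lemma T_idem: "u \<in> V (N d) \<Longrightarrow> T (T u) = T u" using T_I[OF T_prop(1)] by simp

lemma T_lin: "lin (N d) T"
  unfolding lin_def
proof (intro conjI ballI allI)
  show "T ` V (N d) \<subseteq> V (N d)" using T_V by blast
  fix x y a b assume xy: "x \<in> V (N d)" "y \<in> V (N d)"
  have "csc a (T x) + csc b (T y) \<in> I"
    using T_prop xy by (intro cv.subspace_add[OF sI] cv.subspace_scale[OF sI]) auto
  moreover have "(csc a x + csc b y) - (csc a (T x) + csc b (T y)) = csc a (x - T x) + csc b (y - T y)"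
    by (simp add: fun_eq_iff algebra_simps)
  moreover have "csc a (x - T x) + csc b (y - T y) \<in> J"
    using T_prop xy by (intro cv.subspace_add[OF sJ] cv.subspace_scale[OF sJ]) auto
  ultimately show "T (csc a x + csc b y) = csc a (T x) + csc b (T y)"
    using xy by (intro T_eq) (auto intro: V_add V_csc)
qed

lemma T0: "T 0 = 0" using lin_zero[OF T_lin] .

lemma brI: assumes "x \<in> V (N d)" "y \<in> I" shows "brf d x y \<in> I"
proof -
  have "br (N d) (cst d) x y \<in> I" using iI assms unfolding is_ideal_def by blast
  moreover have "y \<in> V (N d)" using assms IV by blast
  ultimately show ?thesis using br_eq[OF assms(1)] by simp
qed
lemma brJ: assumes "x \<in> V (N d)" "y \<in> J" shows "brf d x y \<in> J"
proof -
  have "br (N d) (cst d) x y \<in> J" using iJ assms unfolding is_ideal_def by blast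
  moreover have "y \<in> V (N d)" using assms JV by blast
  ultimately show ?thesis using br_eq[OF assms(1)] by simp
qed

lemma R1: assumes "x \<in> V (N d)" "y \<in> V (N d)" shows "T (brf d x y) = brf d (T x) y"
proof (rule T_eq)
  show "brf d x y \<in> V (N d)" by (rule brf_V)
  have "brf d y (T x) \<in> I" using brI[OF assms(2) T_prop(1)[OF assms(1)]] .
  then show "brf d (T x) y \<in> I" using brf_anti[of d "T x" y] cv.subspace_neg[OF sI] by simp
  have "brf d y (x - T x) \<in> J" using brJ[OF assms(2) T_prop(2)[OF assms(1)]] .
  then have "brf d (x - T x) y \<in> J" using brf_anti[of d "x - T x" y] cv.subspace_neg[OF sJ] by simp
  then show "brf d x y - brf d (T x) y \<in> J" by (simp add: brf_diff1)
qed

lemma R2: assumes "x \<in> V (N d)" "y \<in> V (N d)" shows "T (brf d x y) = brf d x (T y)"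
proof (rule T_eq)
  show "brf d x y \<in> V (N d)" by (rule brf_V)
  show "brf d x (T y) \<in> I" using brI[OF assms(1) T_prop(1)[OF assms(2)]] .
  have "brf d x (y - T y) \<in> J" using brJ[OF assms(1) T_prop(2)[OF assms(2)]] .
  then show "brf d x y - brf d x (T y) \<in> J" by (simp add: brf_diff2)
qed

end

context decomp begin

lemma d0: "0 < d" "1 < d" "2 < d" "2 \<le> d" using d3 by auto

lemmas evs = ev_x_V ev_y_V ev_012_V ev_z_V ev_012_V(2)[unfolded One_nat_def]

definition lam where "lam = T (ev (xI d 0)) (xI d 0)"

lemma cent_gen:
  "T (ev 0) 0 = lam \<and> T (ev 0) 1 = 0 \<and> (\<forall>p<d. T (ev 0) (xI d p) = 0 \<and> T (ev 0) (yI d p) = 0) \<and>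
   T (ev 1) 1 = lam \<and> T (ev 1) 0 = 0 \<and> (\<forall>p<d. T (ev 1) (xI d p) = 0 \<and> T (ev 1) (yI d p) = 0) \<and>
   (\<forall>i<d. T (ev (xI d i)) 0 = 0 \<and> T (ev (xI d i)) 1 = 0 \<and> (\<forall>p<d. T (ev (xI d i)) (xI d p) = (if p = i then lam else 0)
          \<and> T (ev (xI d i)) (yI d p) = 0)) \<and>
   (\<forall>j<d. T (ev (yI d j)) 0 = 0 \<and> T (ev (yI d j)) 1 = 0 \<and> (\<forall>p<d. T (ev (yI d j)) (xI d p) = 0
          \<and> T (ev (yI d j)) (yI d p) = (if p = j then lam else 0)))"
proof -
  note b1x' = b1x[unfolded One_nat_def] and b1y' = b1y[unfolded One_nat_def]
  have C1: "brf d (T (ev (xI d i))) (ev (xI d k)) = 0" if a: "i < d" "k < d" for i k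
    using R1[of "ev (xI d i)" "ev (xI d k)"] a by (simp add: evs bxx T0)
  have X_Y: "T (ev (xI d i)) (yI d q) = 0" if a: "i < d" "q < d" for i q
  proof -
    obtain k where k: "k < d" "k \<noteq> q" using ex_other[OF d3 a(2) a(2)] by blast
    show ?thesis using fun_cong[OF C1[OF a(1) k(1)], of "zI d k q"] k a
      by (simp add: zt_def split: if_splits)
  qed
  have X_0: "T (ev (xI d i)) 0 = 0" if a: "i < d" for i
    using fun_cong[OF C1[OF a a], of "zI d i i"] a X_Y[OF a a]
    by (simp add: zt_def split: if_splits)
  have C2: "brf d (T (ev (yI d j))) (ev (yI d l)) = 0" if a: "j < d" "l < d" for j l
    using R1[of "ev (yI d j)" "ev (yI d l)"] a by (simp add: evs byy T0)
  have Y_X: "T (ev (yI d j)) (xI d p) = 0" if a: "j < d" "p < d" for j p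
  proof -
    obtain l where l: "l < d" "l \<noteq> p" using ex_other[OF d3 a(2) a(2)] by blast
    show ?thesis using fun_cong[OF C2[OF a(1) l(1)], of "zI d p l"] l a
      by (simp add: zt_def split: if_splits)
  qed
  have Y_1: "T (ev (yI d j)) 1 = 0" if a: "j < d" for j
    using fun_cong[OF C2[OF a a], of "zI d j j"] a Y_X[OF a a]
    by (simp add: zt_def split: if_splits)
  have C3: "brf d (T (ev 0)) (ev (yI d j)) = 0" if a: "j < d" for j
    using R1[of "ev 0" "ev (yI d j)"] a by (simp add: evs b0y T0)
  have P_X: "T (ev 0) (xI d p) = 0" if a: "p < d" for p
  proof -
    obtain j where j: "j < d" "j \<noteq> p" using ex_other[OF d3 a a] by blast
    show ?thesis using fun_cong[OF C3[OF j(1)], of "zI d p j"] j a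
      by (simp add: zt_def split: if_splits)
  qed
  have P_1: "T (ev 0) 1 = 0"
    using fun_cong[OF C3[of 1], of "zI d 1 1"] d0 P_X[of 1] by (simp add: zt_def split: if_splits)
  have C4: "brf d (T (ev 1)) (ev (xI d i)) = 0" if a: "i < d" for i
    using R1[of "ev 1" "ev (xI d i)"] a by (simp add: evs b1x b1x' T0)
  have Q_Y: "T (ev 1) (yI d q) = 0" if a: "q < d" for q
  proof -
    obtain i where i: "i < d" "i \<noteq> q" using ex_other[OF d3 a a] by blast
    show ?thesis using fun_cong[OF C4[OF i(1)], of "zI d i q"] i a
      by (simp add: zt_def split: if_splits)
  qed
  have Q_0: "T (ev 1) 0 = 0"
    using fun_cong[OF C4[of 0], of "zI d 0 0"] d0 Q_Y[of 0] by (simp add: zt_def split: if_splits)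
  have C5: "brf d (T (ev (xI d i))) (ev (yI d j)) = brf d (ev (xI d i)) (T (ev (yI d j)))" if a: "i < d" "j < d" for i j
    using R1[of "ev (xI d i)" "ev (yI d j)"] R2[of "ev (xI d i)" "ev (yI d j)"] a by (simp add: evs)
  have X_X: "T (ev (xI d i)) (xI d p) = 0" if a: "i < d" "p < d" "p \<noteq> i" for i p
  proof -
    obtain j where j: "j < d" "j \<noteq> p" using ex_other[OF d3 a(2) a(2)] by blast
    show ?thesis using fun_cong[OF C5[OF a(1) j(1)], of "zI d p j"] j a
      by (simp add: zt_def split: if_splits)
  qed
  have X_1: "T (ev (xI d i)) 1 = 0" if a: "i < d" for i
  proof -
    obtain p where p: "p < d" "p \<noteq> i" using ex_other[OF d3 a a] by blast
    show ?thesis using fun_cong[OF C5[OF a p(1)], of "zI d p p"] p a X_X[OF a p(1)]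
      by (simp add: zt_def split: if_splits)
  qed
  have Y_Y: "T (ev (yI d j)) (yI d q) = 0" if a: "j < d" "q < d" "q \<noteq> j" for j q
  proof -
    obtain i where i: "i < d" "i \<noteq> q" using ex_other[OF d3 a(2) a(2)] by blast
    show ?thesis using fun_cong[OF C5[OF i(1) a(1)], of "zI d i q"] i a
      by (simp add: zt_def split: if_splits)
  qed
  have Y_0: "T (ev (yI d j)) 0 = 0" if a: "j < d" for j
  proof -
    obtain q where q: "q < d" "q \<noteq> j" using ex_other[OF d3 a a] by blast
    show ?thesis using fun_cong[OF C5[OF q(1) a], of "zI d q q"] q a Y_Y[OF a q(1)]
      by (simp add: zt_def split: if_splits)
  qed
  have XY: "T (ev (xI d i)) (xI d i) = T (ev (yI d j)) (yI d j)" if a: "i < d" "j < d" for i j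
    using fun_cong[OF C5[OF a], of "zI d i j"] a X_1[OF a(1)] Y_0[OF a(2)]
    by (simp add: zt_def split: if_splits)
  have C6: "brf d (T (ev 0)) (ev (xI d i)) = brf d (T (ev (xI d i))) (ev (yI d i))" if a: "i < d" for i
    using R1[of "ev 0" "ev (xI d i)"] R1[of "ev (xI d i)" "ev (yI d i)"] a by (simp add: evs b0x bxy)
  have P_Y: "T (ev 0) (yI d q) = 0" if a: "q < d" for q
  proof -
    obtain i where i: "i < d" "i \<noteq> q" using ex_other[OF d3 a a] by blast
    show ?thesis using fun_cong[OF C6[OF i(1)], of "zI d i q"] i a
      by (simp add: zt_def split: if_splits)
  qed
  have P_0: "T (ev 0) 0 = T (ev (xI d 0)) (xI d 0)"
    using fun_cong[OF C6[of 0], of "zI d 0 0"] d0 P_Y[of 0] X_1[of 0] by (simp add: zt_def split: if_splits)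
  have C7: "brf d (T (ev 1)) (ev (yI d j)) = brf d (T (ev (xI d j))) (ev (yI d j))" if a: "j < d" for j
    using R1[of "ev 1" "ev (yI d j)"] R1[of "ev (xI d j)" "ev (yI d j)"] a by (simp add: evs b1y b1y' bxy)
  have Q_X: "T (ev 1) (xI d p) = 0" if a: "p < d" for p
  proof -
    obtain j where j: "j < d" "j \<noteq> p" using ex_other[OF d3 a a] by blast
    show ?thesis using fun_cong[OF C7[OF j(1)], of "zI d p j"] j a X_X[OF j(1) a]
      by (simp add: zt_def split: if_splits)
  qed
  have Q_1: "T (ev 1) 1 = T (ev (xI d 0)) (xI d 0)"
    using fun_cong[OF C7[of 0], of "zI d 0 0"] d0 Q_X[of 0] X_1[of 0] by (simp add: zt_def split: if_splits)
  have XX: "T (ev (xI d i)) (xI d p) = (if p = i then lam else 0)" if a: "i < d" "p < d" for i p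
    using X_X[OF a] XY[OF a(1) d0(1)] XY[OF d0(1) d0(1)] unfolding lam_def by (cases "p = i") auto
  have YY: "T (ev (yI d j)) (yI d p) = (if p = j then lam else 0)" if a: "j < d" "p < d" for j p
    using Y_Y[OF a] XY[OF d0(1) a(1)] unfolding lam_def by (cases "p = j") auto
  have P_0': "T (ev 0) 0 = lam" using P_0 unfolding lam_def .
  have Q_1': "T (ev 1) 1 = lam" using Q_1 unfolding lam_def .
  show ?thesis using P_0' P_1 P_X P_Y Q_0 Q_1' Q_X Q_Y X_0 X_1 XX X_Y Y_0 Y_1 Y_X YY by simp
qed

end

lemma lin_scale: assumes "lin n g" "x \<in> V n" shows "g (csc a x) = csc a (g x)"
proof -
  have "g (csc a x + csc 0 x) = csc a (g x) + csc 0 (g x)" using assms unfolding lin_def by blast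
  moreover have "csc a x + csc 0 x = csc a x" "csc a (g x) + csc 0 (g x) = csc a (g x)" by (simp_all add: fun_eq_iff)
  ultimately show ?thesis by simp
qed

lemma lin_nil3:
  assumes g: "lin (N d) g" and d3: "3 \<le> d"
    and gen: "\<And>k. k < 3 + 2*d \<Longrightarrow> k \<noteq> 2 \<Longrightarrow> g (ev k) \<in> W1 d"
    and g2: "g (ev 2) \<in> Zs d"
    and gz: "\<And>p q. p < d \<Longrightarrow> q < d \<Longrightarrow> g (ev (zI d p q)) = 0"
  shows "u \<in> V (N d) \<Longrightarrow> g u \<in> W1 d" "w \<in> W1 d \<Longrightarrow> g w \<in> Zs d" "z \<in> Zs d \<Longrightarrow> g z = 0"
proof -
  have evW1: "g (ev k) \<in> W1 d" if kN: "k < N d" for k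
  proof (cases "k < 3 + 2*d")
    case True then show ?thesis
      using gen g2 Zs_sub by (cases "k = 2") auto
  next
    case False then obtain p q where "p < d" "q < d" "k = zI d p q" using idx_cases[OF kN]
      by (auto simp: xI_def yI_def)
    then show ?thesis using gz cv.subspace_0[OF W1_subspace] by simp
  qed
  show "u \<in> V (N d) \<Longrightarrow> g u \<in> W1 d"
  proof -
    assume u: "u \<in> V (N d)"
    show ?thesis unfolding lin_expand[OF g u]
      by (rule cv.subspace_sum[OF W1_subspace]) (auto intro: cv.subspace_scale[OF W1_subspace] evW1)
  qed
  show "w \<in> W1 d \<Longrightarrow> g w \<in> Zs d"
  proof -
    assume w: "w \<in> W1 d"
    have wV: "w \<in> V (N d)" using w W1_sub by blast
    show ?thesis unfolding lin_expand[OF g wV]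
    proof (rule cv.subspace_sum[OF Zs_subspace])
      fix k assume k: "k \<in> {..<N d}"
      show "csc (w k) (g (ev k)) \<in> Zs d"
      proof (cases "k < 3 + 2*d")
        case True
        show ?thesis
        proof (cases "k = 2")
          case True then show ?thesis using g2 cv.subspace_scale[OF Zs_subspace] by simp
        next
          case False
          then have "w k = 0" using low_cases[OF \<open>k < 3 + 2*d\<close>] w by (auto simp: W1_def)
          then show ?thesis using cv.subspace_0[OF Zs_subspace] by (simp add: csc_def zero_fun_def)
        qed
      next
        case False then obtain p q where "p < d" "q < d" "k = zI d p q" using idx_cases[of k d] k
          by (auto simp: xI_def yI_def)
        then show ?thesis using gz cv.subspace_scale[OF Zs_subspace] cv.subspace_0[OF Zs_subspace] by simp
      qed
    qed
  qed
  show "z \<in> Zs d \<Longrightarrow> g z = 0"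
  proof -
    assume z: "z \<in> Zs d"
    have zV: "z \<in> V (N d)" using z Zs_sub W1_sub by blast
    have "(\<Sum>k<N d. csc (z k) (g (ev k))) = (\<Sum>k<N d. 0)"
    proof (rule sum.cong)
      fix k assume k: "k \<in> {..<N d}"
      show "csc (z k) (g (ev k)) = 0"
      proof (cases "k < 3 + 2*d")
        case True then show ?thesis using Zs_low[OF z] by (simp add: fun_eq_iff)
      next
        case False
        then obtain p q where "p < d" "q < d" "k = zI d p q" using idx_cases[of k d] k by (auto simp: xI_def yI_def)
        then show ?thesis using gz by (simp add: fun_eq_iff)
      qed
    qed simp
    then show ?thesis unfolding lin_expand[OF g zV] by simp
  qed
qed

lemma swap_set: "{x + y |x y. x \<in> J \<and> y \<in> I} = {x + y |x y. x \<in> I \<and> (y::nat\<Rightarrow>complex) \<in> J}"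
proof (rule set_eqI, rule iffI)
  fix z assume "z \<in> {x + y |x y. x \<in> J \<and> y \<in> I}"
  then obtain x y where "z = x + y" "x \<in> J" "y \<in> I" by blast
  then have "z = y + x" by (simp add: add.commute)
  then show "z \<in> {x + y |x y. x \<in> I \<and> y \<in> J}" using \<open>x \<in> J\<close> \<open>y \<in> I\<close> by blast
next
  fix z assume "z \<in> {x + y |x y. x \<in> I \<and> y \<in> J}"
  then obtain x y where "z = x + y" "x \<in> I" "y \<in> J" by blast
  then have "z = y + x" by (simp add: add.commute)
  then show "z \<in> {x + y |x y. x \<in> J \<and> y \<in> I}" using \<open>x \<in> I\<close> \<open>y \<in> J\<close> by blast
qed

lemma decomp_swap: assumes "decomp d I J" shows "decomp d J I"
proof -
  interpret decomp d I J by (rule assms)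
  show ?thesis
  proof
    show "3 \<le> d" by (rule d3)
    show "is_ideal (N d) (cst d) J" by (rule iJ)
    show "is_ideal (N d) (cst d) I" by (rule iI)
    show "J \<inter> I = {0}" using int by (simp add: Int_commute)
    show "{x + y |x y. x \<in> J \<and> y \<in> I} = V (N d)" using sm swap_set[of J I] by simp
  qed
qed

context decomp begin

lemma cg_X: "i < d \<Longrightarrow> p < d \<Longrightarrow> T (ev (xI d i)) (xI d p) = (if p = i then lam else 0)"
  "i < d \<Longrightarrow> p < d \<Longrightarrow> T (ev (xI d i)) (yI d p) = 0"
  "i < d \<Longrightarrow> T (ev (xI d i)) 0 = 0" "i < d \<Longrightarrow> T (ev (xI d i)) 1 = 0"
  by (simp_all add: cent_gen cent_gen[unfolded One_nat_def])

lemma T_z: assumes "p < d" "q < d" shows "T (ev (zI d p q)) = csc lam (ev (zI d p q))"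
proof -
  have "T (ev (zI d p q)) = brf d (T (ev (xI d p))) (ev (yI d q))"
    using R1[of "ev (xI d p)" "ev (yI d q)"] assms by (simp add: evs bxy)
  also have "\<dots> = csc lam (ev (zI d p q))"
  proof (rule vec_eqI[of _ d])
    show "brf d (T (ev (xI d p))) (ev (yI d q)) \<in> V (N d)" by (rule brf_V)
    show "csc lam (ev (zI d p q)) \<in> V (N d)" using assms by (intro V_csc evs)
    fix p' q' assume "p' < d" "q' < d"
    then show "brf d (T (ev (xI d p))) (ev (yI d q)) (zI d p' q') = csc lam (ev (zI d p q)) (zI d p' q')"
      using assms cg_X by (auto simp: zt_def)
  qed (use assms in auto)
  finally show ?thesis .
qed

lemma lam_idem: "lam * lam = lam"
proof -
  have z: "ev (zI d 0 0) \<in> V (N d)" using d0 by (simp add: evs)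
  have t: "T (ev (zI d 0 0)) = csc lam (ev (zI d 0 0))" using T_z[OF d0(1) d0(1)] .
  have "T (T (ev (zI d 0 0))) = csc lam (csc lam (ev (zI d 0 0)))"
    unfolding t lin_scale[OF T_lin z] t ..
  moreover have "T (T (ev (zI d 0 0))) = csc lam (ev (zI d 0 0))" using T_idem[OF z] t by simp
  ultimately have e: "csc lam (csc lam (ev (zI d 0 0))) = csc lam (ev (zI d 0 0))" by simp
  have "csc lam (csc lam (ev (zI d 0 0))) (zI d 0 0) = lam * lam" by simp
  moreover have "csc lam (ev (zI d 0 0)) (zI d 0 0) = lam" by simp
  ultimately show ?thesis using e by metis
qed

lemma lam_zero: assumes "lam = 0" shows "I = {0}"
proof -
  have gen: "T (ev k) \<in> W1 d" if "k < 3 + 2*d" "k \<noteq> 2" for k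
  proof -
    have kV: "ev k \<in> V (N d)" using that by (intro ev_V) (simp add: N_def)
    have tV: "T (ev k) \<in> V (N d)" using T_V[OF kV] .
    show ?thesis using low_cases[OF that(1)] that(2)
    proof (elim disjE exE conjE)
      assume "k = 0" then show ?thesis using tV assms by (simp add: W1_def cent_gen cent_gen[unfolded One_nat_def])
    next
      assume "k = 1" then show ?thesis using tV assms by (simp add: W1_def cent_gen cent_gen[unfolded One_nat_def])
    next
      fix i assume "i < d" "k = xI d i" then show ?thesis using tV assms by (simp add: W1_def cent_gen cent_gen[unfolded One_nat_def])
    next
      fix i assume "i < d" "k = yI d i" then show ?thesis using tV assms by (simp add: W1_def cent_gen cent_gen[unfolded One_nat_def])
    qed simp
  qed
  have g2: "T (ev 2) \<in> Zs d"
  proof -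
    have "T (ev 2) = brf d (T (ev 0)) (ev 1)"
      using R1[of "ev 0" "ev 1"] by (simp add: evs b01 b01[unfolded One_nat_def])
    moreover have "T (ev 0) \<in> W1 d" using gen[of 0] by simp
    ultimately show ?thesis using brf_W1_Zs_left[OF d0(4)] by simp
  qed
  have gz: "T (ev (zI d p q)) = 0" if "p < d" "q < d" for p q
    using T_z[OF that] assms by (simp add: fun_eq_iff)
  have n1: "T u \<in> W1 d" if u: "u \<in> V (N d)" for u
    by (rule lin_nil3(1)[OF T_lin d3]) (simp_all add: gen g2 gz u)
  have n2: "T u \<in> Zs d" if u: "u \<in> W1 d" for u
    by (rule lin_nil3(2)[OF T_lin d3]) (simp_all add: gen g2 gz u)
  have n3: "T u = 0" if u: "u \<in> Zs d" for u
    by (rule lin_nil3(3)[OF T_lin d3]) (simp_all add: gen g2 gz u)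
  show ?thesis
  proof
    show "I \<subseteq> {0}"
    proof
      fix x assume x: "x \<in> I"
      then have xV: "x \<in> V (N d)" using IV by blast
      have "T x = x" using T_I[OF x] .
      have "T (T (T x)) = 0" using n3[OF n2[OF n1[OF xV]]] .
      then show "x \<in> {0}" using \<open>T x = x\<close> by simp
    qed
    show "{0} \<subseteq> I" using cv.subspace_0[OF sI] by simp
  qed
qed

lemma lam_swap: "decomp.lam d J I = 1 - lam"
proof -
  interpret D2: decomp d J I by (rule decomp_swap) (rule decomp_axioms)
  have xV: "ev (xI d 0) \<in> V (N d)" using d0 by (simp add: evs)
  have "projI J I (ev (xI d 0)) = ev (xI d 0) - T (ev (xI d 0))"
  proof (rule D2.T_eq[OF xV])
    show "ev (xI d 0) - T (ev (xI d 0)) \<in> J" using T_prop(2)[OF xV] .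
    show "ev (xI d 0) - (ev (xI d 0) - T (ev (xI d 0))) \<in> I" using T_prop(1)[OF xV] by simp
  qed
  then show ?thesis unfolding D2.lam_def lam_def by simp
qed

end

lemma nonsplit_alg: assumes "3 \<le> d" shows "nonsplit (N d) (cst d)"
  unfolding nonsplit_def
proof
  assume "\<exists>I J. is_ideal (N d) (cst d) I \<and> is_ideal (N d) (cst d) J \<and> I \<noteq> {0} \<and> J \<noteq> {0} \<and>
      I \<inter> J = {0} \<and> {x + y |x y. x \<in> I \<and> y \<in> J} = V (N d)"
  then obtain I J where h: "is_ideal (N d) (cst d) I" "is_ideal (N d) (cst d) J" "I \<noteq> {0}" "J \<noteq> {0}"
      "I \<inter> J = {0}" "{x + y |x y. x \<in> I \<and> y \<in> J} = V (N d)" by blast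
  interpret D: decomp d I J using h assms by unfold_locales auto
  interpret D2: decomp d J I by (rule decomp_swap) (rule D.decomp_axioms)
  have "D.lam = 0 \<or> D.lam = 1" using D.lam_idem
    by (metis mult_cancel_right1 mult_zero_left)
  then show False
  proof
    assume "D.lam = 0" then show False using D.lam_zero h(3) by blast
  next
    assume "D.lam = 1" then have "D2.lam = 0" using D.lam_swap by simp
    then show False using D2.lam_zero h(4) by blast
  qed
qed

theorem mainTheorem2:
  fixes \<epsilon> :: real
  assumes "\<epsilon> > 0"
  shows "\<exists>n c. is_lie n c \<and> nonsplit n c \<and> char_nilpotent n c \<and>
           cdim (center n c) > 0 \<and>
           (real n - real (cdim (center n c))) / real (cdim (center n c)) < \<epsilon>"
proof -
  define d where "d = nat \<lceil>5 / \<epsilon>\<rceil> + 3"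
  have d3: "3 \<le> d" by (simp add: d_def)
  have dgt: "5 / \<epsilon> < real d"
  proof -
    have "5 / \<epsilon> \<le> real (nat \<lceil>5 / \<epsilon>\<rceil>)" by linarith
    then show ?thesis by (simp add: d_def)
  qed
  have cd: "cdim (center (N d) (cst d)) = d * d" using center_eq[of d] cdim_Zs[of d] d3 by simp
  have pos: "real d > 0" using d3 by simp
  have ed: "5 < \<epsilon> * real d" using dgt assms by (simp add: field_simps)
  have "real (N d) - real (d * d) = 3 + 2 * real d" by (simp add: N_def)
  moreover have "3 + 2 * real d < \<epsilon> * (real d * real d)"
  proof -
    have "3 + 2 * real d \<le> 5 * real d" using d3 by simp
    also have "\<dots> < (\<epsilon> * real d) * real d" using ed pos by (intro mult_strict_right_mono) auto
    finally show ?thesis by (simp add: mult.assoc)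
  qed
  ultimately have "(real (N d) - real (d * d)) / real (d * d) < \<epsilon>"
    using pos by (simp add: divide_less_eq)
  moreover have "cdim (center (N d) (cst d)) > 0" using cd d3 by simp
  ultimately show ?thesis
    using is_lie_alg[of d] nonsplit_alg[OF d3] char_nilp[OF d3] cd d3
    by (intro exI[of _ "N d"] exI[of _ "cst d"]) simp
qed

end
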